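(* Let $\mathcal{N}$ be a nonsingular 2-step nilpotent Lie algebra over $\mathbb{R}$. If $\mathcal{N}$ satisfies the partial automatic continuity, then so does $\mathcal{N}\oplus\mathcal{N}$.
   Context: A 2-step nilpotent Lie algebra $\mathcal{N}$ with center $\mathfrak{z}$ is nonsingular if $\operatorname{ad}X:\mathcal{N}\to[\mathcal{N},\mathcal{N}]$ is surjective for every $X\in\mathcal{N}\setminus\mathfrak{z}$. A Lie ring automorphism is a bijective additive bracket-preserving map (not necessarily $\mathbb{R}$-linear); a central automorphism is a Lie ring automorphism $\mu$ with $\mu(x)-x$ central for all $x$. Field automorphisms: if a Lie algebra is a direct sum of ideals $\mathcal{N}_1\oplus\cdots\oplus\mathcal{N}_k$, for each $\mathcal{N}_i$ that is the realification of a complex Lie algebra choose a $\mathbb{C}$-basis $e_1,\dots,e_m$ and a field automorphism $\varphi$ of $\mathbb{C}$ fixing the structure constants and set $\sigma_i(\sum x_le_l)=\sum\varphi(x_l)e_l$, otherwise $\sigma_i=\mathrm{id}$; $\sigma_1\times\cdots\times\sigma_k$ is a field automorphism. A real nilpotent Lie algebra satisfies the partial automatic continuity if every Lie ring automorphism is a composition $\mu\circ\overline{f}\circ\sigma$ of a central automorphism, an $\mathbb{R}$-linear Lie algebra automorphism and a field automorphism. *)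

theory Defs
  imports "HOL-Analysis.Analysis"
begin

text \<open>A finite-dimensional real Lie algebra is modelled as a Euclidean space type
  together with a bracket operation.\<close>

definition lie_algebra :: "('a::euclidean_space \<Rightarrow> 'a \<Rightarrow> 'a) \<Rightarrow> bool" where
  "lie_algebra br \<longleftrightarrow> bilinear br \<and> (\<forall>x. br x x = 0) \<and>
     (\<forall>x y z. br x (br y z) + br y (br z x) + br z (br x y) = 0)"

definition lie_center :: "('a::euclidean_space \<Rightarrow> 'a \<Rightarrow> 'a) \<Rightarrow> 'a set" where
  "lie_center br = {z. \<forall>x. br z x = 0}"

definition derived_algebra :: "('a::euclidean_space \<Rightarrow> 'a \<Rightarrow> 'a) \<Rightarrow> 'a set" where
  "derived_algebra br = span {br x y | x y. True}"

definition two_step_nilpotent :: "('a::euclidean_space \<Rightarrow> 'a \<Rightarrow> 'a) \<Rightarrow> bool" where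
  "two_step_nilpotent br \<longleftrightarrow> (\<forall>x y z. br x (br y z) = 0) \<and> (\<exists>x y. br x y \<noteq> 0)"

definition nonsingular :: "('a::euclidean_space \<Rightarrow> 'a \<Rightarrow> 'a) \<Rightarrow> bool" where
  "nonsingular br \<longleftrightarrow>
     (\<forall>X. X \<notin> lie_center br \<longrightarrow> range (br X) = derived_algebra br)"

definition lie_ring_aut :: "('a::euclidean_space \<Rightarrow> 'a \<Rightarrow> 'a) \<Rightarrow> ('a \<Rightarrow> 'a) \<Rightarrow> bool" where
  "lie_ring_aut br F \<longleftrightarrow> bij F \<and> (\<forall>x y. F (x + y) = F x + F y) \<and>
     (\<forall>x y. F (br x y) = br (F x) (F y))"

definition central_aut :: "('a::euclidean_space \<Rightarrow> 'a \<Rightarrow> 'a) \<Rightarrow> ('a \<Rightarrow> 'a) \<Rightarrow> bool" where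
  "central_aut br \<mu> \<longleftrightarrow> lie_ring_aut br \<mu> \<and> (\<forall>x. \<mu> x - x \<in> lie_center br)"

definition lie_alg_aut :: "('a::euclidean_space \<Rightarrow> 'a \<Rightarrow> 'a) \<Rightarrow> ('a \<Rightarrow> 'a) \<Rightarrow> bool" where
  "lie_alg_aut br f \<longleftrightarrow> linear f \<and> lie_ring_aut br f"

definition complex_field_aut :: "(complex \<Rightarrow> complex) \<Rightarrow> bool" where
  "complex_field_aut \<phi> \<longleftrightarrow> bij \<phi> \<and> (\<forall>a b. \<phi> (a + b) = \<phi> a + \<phi> b) \<and>
     (\<forall>a b. \<phi> (a * b) = \<phi> a * \<phi> b)"

definition lie_ideal :: "('a::euclidean_space \<Rightarrow> 'a \<Rightarrow> 'a) \<Rightarrow> 'a set \<Rightarrow> bool" where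
  "lie_ideal br V \<longleftrightarrow> subspace V \<and> (\<forall>x v. v \<in> V \<longrightarrow> br x v \<in> V)"

definition is_decomp :: "nat \<Rightarrow> (nat \<Rightarrow> 'a::euclidean_space set) \<Rightarrow> 'a \<Rightarrow> (nat \<Rightarrow> 'a) \<Rightarrow> bool" where
  "is_decomp k V x v \<longleftrightarrow> (\<forall>i<k. v i \<in> V i) \<and> (\<forall>i\<ge>k. v i = 0) \<and> x = (\<Sum>i<k. v i)"

definition ideal_decomposition ::
    "('a::euclidean_space \<Rightarrow> 'a \<Rightarrow> 'a) \<Rightarrow> nat \<Rightarrow> (nat \<Rightarrow> 'a set) \<Rightarrow> bool" where
  "ideal_decomposition br k V \<longleftrightarrow> (\<forall>i<k. lie_ideal br (V i)) \<and>
     (\<forall>x. \<exists>!v. is_decomp k V x v)"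

definition cmul :: "('a::euclidean_space \<Rightarrow> 'a) \<Rightarrow> complex \<Rightarrow> 'a \<Rightarrow> 'a" where
  "cmul J z x = Re z *\<^sub>R x + Im z *\<^sub>R J x"

text \<open>The ideal V is the realification of a complex Lie algebra, with complex structure J.\<close>
definition complex_structure ::
    "('a::euclidean_space \<Rightarrow> 'a \<Rightarrow> 'a) \<Rightarrow> 'a set \<Rightarrow> ('a \<Rightarrow> 'a) \<Rightarrow> bool" where
  "complex_structure br V J \<longleftrightarrow> linear J \<and> (\<forall>x\<in>V. J x \<in> V) \<and> (\<forall>x\<in>V. J (J x) = - x) \<and>
     (\<forall>x\<in>V. \<forall>y\<in>V. br (J x) y = J (br x y))"

definition complex_basis :: "'a::euclidean_space set \<Rightarrow> ('a \<Rightarrow> 'a) \<Rightarrow> nat \<Rightarrow> (nat \<Rightarrow> 'a) \<Rightarrow> bool" where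
  "complex_basis V J m e \<longleftrightarrow> (\<forall>l<m. e l \<in> V) \<and>
     (\<forall>x\<in>V. \<exists>!c. (\<forall>l\<ge>m. c l = 0) \<and> x = (\<Sum>l<m. cmul J (c l) (e l)))"

definition complex_field_piece ::
    "('a::euclidean_space \<Rightarrow> 'a \<Rightarrow> 'a) \<Rightarrow> 'a set \<Rightarrow> ('a \<Rightarrow> 'a) \<Rightarrow> bool" where
  "complex_field_piece br V s \<longleftrightarrow>
     (\<exists>J m e \<phi>. complex_structure br V J \<and> complex_basis V J m e \<and> complex_field_aut \<phi> \<and>
        (\<forall>p<m. \<forall>q<m. \<exists>c. (\<forall>r\<ge>m. c r = 0) \<and>
            br (e p) (e q) = (\<Sum>r<m. cmul J (c r) (e r)) \<and> (\<forall>r<m. \<phi> (c r) = c r)) \<and>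
        (\<forall>c. (\<forall>l\<ge>m. c l = 0) \<longrightarrow>
            s (\<Sum>l<m. cmul J (c l) (e l)) = (\<Sum>l<m. cmul J (\<phi> (c l)) (e l))))"

definition field_aut :: "('a::euclidean_space \<Rightarrow> 'a \<Rightarrow> 'a) \<Rightarrow> ('a \<Rightarrow> 'a) \<Rightarrow> bool" where
  "field_aut br \<sigma> \<longleftrightarrow>
     (\<exists>k V s. ideal_decomposition br k V \<and>
        (\<forall>i<k. (\<forall>x\<in>V i. s i x = x) \<or> complex_field_piece br (V i) (s i)) \<and>
        (\<forall>x v. is_decomp k V x v \<longrightarrow> \<sigma> x = (\<Sum>i<k. s i (v i))))"

definition partial_automatic_continuity :: "('a::euclidean_space \<Rightarrow> 'a \<Rightarrow> 'a) \<Rightarrow> bool" where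
  "partial_automatic_continuity br \<longleftrightarrow>
     (\<forall>F. lie_ring_aut br F \<longrightarrow>
        (\<exists>\<mu> f \<sigma>. central_aut br \<mu> \<and> lie_alg_aut br f \<and> field_aut br \<sigma> \<and> F = \<mu> \<circ> f \<circ> \<sigma>))"

definition prod_bracket ::
    "('a::euclidean_space \<Rightarrow> 'a \<Rightarrow> 'a) \<Rightarrow> ('b::euclidean_space \<Rightarrow> 'b \<Rightarrow> 'b) \<Rightarrow>
     'a \<times> 'b \<Rightarrow> 'a \<times> 'b \<Rightarrow> 'a \<times> 'b" where
  "prod_bracket br1 br2 x y = (br1 (fst x) (fst y), br2 (snd x) (snd y))"

end

theory Submission
  imports Defs
begin

definition sw :: "'a \<times> 'b \<Rightarrow> 'b \<times> 'a" where "sw p = (snd p, fst p)"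

lemma sw_sw[simp]: "sw (sw p) = p" by (simp add: sw_def)
lemma sw_Pair[simp]: "sw (a, b) = (b, a)" by (simp add: sw_def)

definition addf :: "('a::ab_group_add \<Rightarrow> 'b::ab_group_add) \<Rightarrow> bool" where
  "addf f \<longleftrightarrow> (\<forall>x y. f (x+y) = f x + f y)"

lemma addf_0: assumes "addf f" shows "f 0 = 0"
proof -
  have "f (0+0) = f 0 + f 0" using assms unfolding addf_def by blast
  then show ?thesis by simp
qed
lemma addf_neg: assumes "addf f" shows "f (- x) = - f x"
proof -
  have "f (x + - x) = f x + f (- x)" using assms unfolding addf_def by blast
  then have "0 = f x + f (- x)" using addf_0[OF assms] by simp
  then show ?thesis by (simp add: eq_neg_iff_add_eq_0 add.commute)
qed
lemma addf_diff: assumes "addf f" shows "f (x - y) = f x - f y"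
proof -
  have "f (x + - y) = f x + f (- y)" using assms unfolding addf_def by blast
  then show ?thesis using addf_neg[OF assms] by simp
qed

lemma lra_addf: "lie_ring_aut brr F \<Longrightarrow> addf F"
  by (simp add: lie_ring_aut_def addf_def)
lemma lra_add: "lie_ring_aut brr F \<Longrightarrow> F (x + y) = F x + F y"
  by (simp add: lie_ring_aut_def)
lemma lra_br: "lie_ring_aut brr F \<Longrightarrow> F (brr x y) = brr (F x) (F y)"
  by (simp add: lie_ring_aut_def)
lemma lra_0: "lie_ring_aut brr F \<Longrightarrow> F 0 = 0"
  using lra_addf addf_0 by blast
lemma lra_diff: "lie_ring_aut brr F \<Longrightarrow> F (x - y) = F x - F y"
  using lra_addf addf_diff by blast
lemma lra_bij: "lie_ring_aut brr F \<Longrightarrow> bij F"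
  by (simp add: lie_ring_aut_def)
lemma lra_inj_eq: assumes "lie_ring_aut brr F" shows "F x = F y \<longleftrightarrow> x = y"
proof -
  have "inj F" using lra_bij[OF assms] bij_is_inj by blast
  then show ?thesis by (simp add: inj_eq)
qed
lemma lra_surj: assumes "lie_ring_aut brr F" shows "\<exists>x. y = F x"
proof -
  have "surj F" using lra_bij[OF assms] bij_is_surj by blast
  then show ?thesis by (rule surjD)
qed
lemma lra_inv_f: "lie_ring_aut brr F \<Longrightarrow> F (inv F y) = y"
  by (meson bij_inv_eq_iff lra_bij)
lemma lra_f_inv: "lie_ring_aut brr F \<Longrightarrow> inv F (F y) = y"
  by (meson bij_is_inj inv_f_f lra_bij)

lemma lra_comp: "lie_ring_aut brr F \<Longrightarrow> lie_ring_aut brr G \<Longrightarrow> lie_ring_aut brr (F \<circ> G)"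
  unfolding lie_ring_aut_def by (auto intro: bij_comp)

lemma lra_inv: assumes "lie_ring_aut brr F" shows "lie_ring_aut brr (inv F)"
  unfolding lie_ring_aut_def
proof (intro conjI allI)
  show "bij (inv F)" using assms bij_imp_bij_inv lra_bij by blast
  fix x y
  have "F (inv F x + inv F y) = x + y" by (simp add: lra_add[OF assms] lra_inv_f[OF assms])
  then have "inv F (x+y) = inv F (F (inv F x + inv F y))" by simp
  then show "inv F (x + y) = inv F x + inv F y" by (simp add: lra_f_inv[OF assms])
  have "F (brr (inv F x) (inv F y)) = brr x y" by (simp add: lra_br[OF assms] lra_inv_f[OF assms])
  then have "inv F (brr x y) = inv F (F (brr (inv F x) (inv F y)))" by simp
  then show "inv F (brr x y) = brr (inv F x) (inv F y)" by (simp add: lra_f_inv[OF assms])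
qed

lemma lra_center: assumes "lie_ring_aut brr F"
  shows "F x \<in> lie_center brr \<longleftrightarrow> x \<in> lie_center brr"
proof
  assume h: "F x \<in> lie_center brr"
  show "x \<in> lie_center brr" unfolding lie_center_def
  proof (clarify)
    fix y
    have "F (brr x y) = brr (F x) (F y)" using lra_br[OF assms] by blast
    also have "\<dots> = 0" using h by (simp add: lie_center_def)
    also have "\<dots> = F 0" using lra_0[OF assms] by simp
    finally show "brr x y = 0" using lra_inj_eq[OF assms] by blast
  qed
next
  assume h: "x \<in> lie_center brr"
  show "F x \<in> lie_center brr" unfolding lie_center_def
  proof (clarify)
    fix y
    obtain u where u: "y = F u" using assms lra_surj by blast
    have "brr (F x) y = F (brr x u)" using lra_br[OF assms] u by simp
    also have "\<dots> = 0" using h assms lra_0 by (simp add: lie_center_def)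
    finally show "brr (F x) y = 0" .
  qed
qed

lemma lra_range: assumes "lie_ring_aut brr F"
  shows "F ` range (brr x) = range (brr (F x))"
proof
  show "F ` range (brr x) \<subseteq> range (brr (F x))" using lra_br[OF assms] by blast
  show "range (brr (F x)) \<subseteq> F ` range (brr x)"
  proof
    fix w assume "w \<in> range (brr (F x))"
    then obtain y where "w = brr (F x) y" by auto
    then have "w = F (brr x (inv F y))" by (simp add: lra_br[OF assms] lra_inv_f[OF assms])
    then show "w \<in> F ` range (brr x)" by auto
  qed
qed

lemma central_comp:
  assumes "central_aut brr m1" "central_aut brr m2" "subspace (lie_center brr)"
  shows "central_aut brr (m1 \<circ> m2)"
  unfolding central_aut_def
proof (intro conjI allI)
  show "lie_ring_aut brr (m1 \<circ> m2)"
    using assms lra_comp unfolding central_aut_def by blast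
  fix x
  have eq: "(m1 \<circ> m2) x - x = (m1 (m2 x) - m2 x) + (m2 x - x)" by simp
  have a: "m1 (m2 x) - m2 x \<in> lie_center brr" using assms(1) unfolding central_aut_def by blast
  have b: "m2 x - x \<in> lie_center brr" using assms(2) unfolding central_aut_def by blast
  have "m1 (m2 x) - m2 x + (m2 x - x) \<in> lie_center brr"
    using subspace_add[OF assms(3) a b] .
  then show "(m1 \<circ> m2) x - x \<in> lie_center brr" by (subst eq)
qed



locale nsl =
  fixes br :: "'a::euclidean_space \<Rightarrow> 'a \<Rightarrow> 'a"
  assumes la: "lie_algebra br"
    and tsn: "two_step_nilpotent br"
    and ns: "nonsingular br"
begin

abbreviation "Z \<equiv> lie_center br"
abbreviation "D \<equiv> derived_algebra br"

lemma bil: "bilinear br" using la by (simp add: lie_algebra_def)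
lemma alt: "br x x = 0" using la by (simp add: lie_algebra_def)
lemma ladd: "br (x + y) z = br x z + br y z" using bilinear_ladd[OF bil] .
lemma radd: "br x (y + z) = br x y + br x z" using bilinear_radd[OF bil] .
lemma br0l[simp]: "br 0 x = 0" using bilinear_lzero[OF bil] .
lemma br0r[simp]: "br x 0 = 0" using bilinear_rzero[OF bil] .
lemma lsub: "br (x - y) z = br x z - br y z" using bilinear_lsub[OF bil] .
lemma rsub: "br x (y - z) = br x y - br x z" using bilinear_rsub[OF bil] .
lemma lneg: "br (- x) z = - br x z" using bilinear_lneg[OF bil] .

lemma antisym: "br x y = - br y x"
proof -
  have "0 = br (x + y) (x + y)" using alt by simp
  also have "\<dots> = br x x + br x y + (br y x + br y y)" by (simp add: ladd radd)
  also have "\<dots> = br x y + br y x" using alt by simp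
  finally show ?thesis by (simp add: eq_neg_iff_add_eq_0)
qed

lemma Z_iff: "z \<in> Z \<longleftrightarrow> (\<forall>x. br z x = 0)" by (simp add: lie_center_def)

lemma Zr: "z \<in> Z \<Longrightarrow> br x z = 0"
  using antisym[of x z] by (simp add: Z_iff)

lemma subspace_Z: "subspace Z"
  unfolding subspace_def
proof (intro conjI ballI allI)
  show "0 \<in> Z" by (simp add: Z_iff)
  fix x y assume "x \<in> Z" "y \<in> Z"
  then show "x + y \<in> Z" by (simp add: Z_iff ladd)
next
  fix c x assume "x \<in> Z"
  then show "c *\<^sub>R x \<in> Z" by (simp add: Z_iff bilinear_lmul[OF bil])
qed

lemma Z_add: "x \<in> Z \<Longrightarrow> y \<in> Z \<Longrightarrow> x + y \<in> Z" using subspace_add[OF subspace_Z] .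
lemma Z_diff: "x \<in> Z \<Longrightarrow> y \<in> Z \<Longrightarrow> x - y \<in> Z" using subspace_diff[OF subspace_Z] .
lemma Z_neg: "x \<in> Z \<Longrightarrow> - x \<in> Z" using subspace_neg[OF subspace_Z] .
lemma Z_0: "0 \<in> Z" using subspace_0[OF subspace_Z] .
lemma Z_add_not: "x \<notin> Z \<Longrightarrow> y \<in> Z \<Longrightarrow> x + y \<notin> Z"
proof
  assume "x \<notin> Z" "y \<in> Z" "x + y \<in> Z"
  then have "(x + y) - y \<in> Z" using Z_diff by blast
  then show False using \<open>x \<notin> Z\<close> by simp
qed

lemma br_in_Z: "br x y \<in> Z"
  unfolding Z_iff
proof
  fix w
  have "br (br x y) w = - br w (br x y)" by (rule antisym)
  also have "br w (br x y) = 0" using tsn by (simp add: two_step_nilpotent_def)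
  finally show "br (br x y) w = 0" by simp
qed

lemma br_in_D: "br x y \<in> D"
  unfolding derived_algebra_def by (rule span_base) blast

lemma D_sub_Z: "D \<subseteq> Z"
  unfolding derived_algebra_def
  by (rule span_minimal) (use br_in_Z subspace_Z in auto)

lemma subspace_D: "subspace D"
  unfolding derived_algebra_def by (rule subspace_span)

lemma absorbl: "z \<in> Z \<Longrightarrow> br (x + z) y = br x y"
  by (simp add: ladd Z_iff)
lemma absorbr: "z \<in> Z \<Longrightarrow> br y (x + z) = br y x"
  by (simp add: radd Zr)

lemma range_nc: "X \<notin> Z \<Longrightarrow> range (br X) = D"
  using ns by (simp add: nonsingular_def)

lemma range_c: "X \<in> Z \<Longrightarrow> range (br X) = {0}"
  by (auto simp: Z_iff)

lemma X0_ex: "\<exists>X0 y0. X0 \<notin> Z \<and> br X0 y0 \<noteq> 0"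
  using tsn by (auto simp: two_step_nilpotent_def Z_iff)

definition "X0 = (SOME X. X \<notin> Z)"
lemma X0: "X0 \<notin> Z"
  unfolding X0_def using X0_ex by (metis (mono_tags, lifting) someI_ex)

lemma D_br: "d \<in> D \<Longrightarrow> \<exists>y. d = br X0 y"
  using range_nc[OF X0] by (metis imageE)

lemma D_nz: "\<exists>d\<in>D. d \<noteq> 0"
  using X0_ex br_in_D by blast


abbreviation "P \<equiv> prod_bracket br br"

lemma P_simp[simp]: "P (a, b) (c, d) = (br a c, br b d)"
  by (simp add: prod_bracket_def)
lemma P_fst[simp]: "fst (P x y) = br (fst x) (fst y)"
  by (simp add: prod_bracket_def)
lemma P_snd[simp]: "snd (P x y) = br (snd x) (snd y)"
  by (simp add: prod_bracket_def)

lemma ZP_iff: "p \<in> lie_center P \<longleftrightarrow> fst p \<in> Z \<and> snd p \<in> Z"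
proof
  assume h: "p \<in> lie_center P"
  have "br (fst p) x = 0" for x
  proof -
    have "P p (x, 0) = 0" using h by (simp add: lie_center_def)
    then have "fst (P p (x, 0)) = 0" by simp
    then show ?thesis by simp
  qed
  moreover have "br (snd p) x = 0" for x
  proof -
    have "P p (0, x) = 0" using h by (simp add: lie_center_def)
    then have "snd (P p (0, x)) = 0" by simp
    then show ?thesis by simp
  qed
  ultimately show "fst p \<in> Z \<and> snd p \<in> Z" by (simp add: Z_iff)
next
  assume "fst p \<in> Z \<and> snd p \<in> Z"
  then show "p \<in> lie_center P"
    unfolding lie_center_def by (auto simp: Z_iff prod_eq_iff)
qed

lemma subspace_ZP: "subspace (lie_center P)"
proof -
  have "lie_center P = Z \<times> Z" using ZP_iff by (auto simp: mem_Times_iff)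
  then show ?thesis using subspace_Times[OF subspace_Z subspace_Z] by simp
qed

lemma range_P: "range (P p) = (if fst p \<in> Z then {0} else D) \<times> (if snd p \<in> Z then {0} else D)"
proof -
  have "range (P p) = range (br (fst p)) \<times> range (br (snd p))"
  proof (intro set_eqI iffI)
    fix w assume "w \<in> range (P p)"
    then obtain u where "w = P p u" by blast
    then have "fst w = br (fst p) (fst u)" "snd w = br (snd p) (snd u)" by simp_all
    then show "w \<in> range (br (fst p)) \<times> range (br (snd p))" by (simp add: mem_Times_iff)
  next
    fix w assume "w \<in> range (br (fst p)) \<times> range (br (snd p))"
    then obtain u v where "fst w = br (fst p) u" "snd w = br (snd p) v" by (auto simp: mem_Times_iff)
    then have "w = P p (u, v)" by (simp add: prod_eq_iff)
    then show "w \<in> range (P p)" by simp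
  qed
  then show ?thesis using range_nc range_c by simp
qed

lemma sw_lra: "lie_ring_aut P sw"
  unfolding lie_ring_aut_def
proof (intro conjI allI)
  show "bij (sw :: 'a \<times> 'a \<Rightarrow> _)"
    by (metis bijI' sw_sw)
qed (auto simp: sw_def prod_bracket_def)

lemma sw_linear: "linear (sw :: 'a \<times> 'a \<Rightarrow> _)"
  by (rule linearI) (auto simp: sw_def)

lemma map_prod_lra:
  assumes "lie_ring_aut br a" "lie_ring_aut br b"
  shows "lie_ring_aut P (map_prod a b)"
  unfolding lie_ring_aut_def
proof (intro conjI allI)
  have "bij_betw (map_prod a b) (UNIV \<times> UNIV) (UNIV \<times> UNIV)"
    by (rule bij_betw_map_prod) (use lra_bij[OF assms(1)] lra_bij[OF assms(2)] in auto)
  then show "bij (map_prod a b)" by simp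
  fix x y :: "'a \<times> 'a"
  show "map_prod a b (x + y) = map_prod a b x + map_prod a b y"
    by (cases x; cases y) (simp add: lra_add[OF assms(1)] lra_add[OF assms(2)])
  show "map_prod a b (P x y) = P (map_prod a b x) (map_prod a b y)"
    by (cases x; cases y) (simp add: lra_br[OF assms(1)] lra_br[OF assms(2)])
qed

lemma map_prod_central:
  assumes "central_aut br a" "central_aut br b"
  shows "central_aut P (map_prod a b)"
  unfolding central_aut_def
proof (intro conjI allI)
  show "lie_ring_aut P (map_prod a b)"
    using assms map_prod_lra unfolding central_aut_def by blast
  fix x :: "'a \<times> 'a"
  have "a (fst x) - fst x \<in> Z" "b (snd x) - snd x \<in> Z"
    using assms unfolding central_aut_def by blast+
  then show "map_prod a b x - x \<in> lie_center P"
    by (cases x) (simp add: ZP_iff)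
qed

lemma map_prod_linear:
  fixes a b :: "'a \<Rightarrow> 'a"
  assumes "linear a" "linear b"
  shows "linear (map_prod a b)"
proof (rule linearI)
  fix x y :: "'a \<times> 'a" and c :: real
  show "map_prod a b (x + y) = map_prod a b x + map_prod a b y"
    by (cases x; cases y) (simp add: linear_add[OF assms(1)] linear_add[OF assms(2)])
  show "map_prod a b (c *\<^sub>R x) = c *\<^sub>R map_prod a b x"
    by (cases x) (simp add: linear_scale[OF assms(1)] linear_scale[OF assms(2)])
qed

lemma map_prod_lie_alg:
  assumes "lie_alg_aut br a" "lie_alg_aut br b"
  shows "lie_alg_aut P (map_prod a b)"
  using assms map_prod_linear map_prod_lra unfolding lie_alg_aut_def by blast

lemma sw_central:
  assumes "central_aut P m"
  shows "central_aut P (sw \<circ> m \<circ> sw)"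
  unfolding central_aut_def
proof (intro conjI allI)
  have "lie_ring_aut P (sw \<circ> m)" using lra_comp sw_lra assms central_aut_def by blast
  then show "lie_ring_aut P (sw \<circ> m \<circ> sw)" using lra_comp sw_lra by blast
  fix x :: "'a \<times> 'a"
  have "m (sw x) - sw x \<in> lie_center P" using assms central_aut_def by blast
  then show "(sw \<circ> m \<circ> sw) x - x \<in> lie_center P"
    by (cases x) (auto simp: ZP_iff sw_def)
qed

lemma sw_lie_alg:
  assumes "lie_alg_aut P f"
  shows "lie_alg_aut P (sw \<circ> f)"
  using assms lra_comp sw_lra linear_compose sw_linear unfolding lie_alg_aut_def by blast

lemma DD_br: "w \<in> D \<times> D \<Longrightarrow> \<exists>y. w = P (X0, X0) y"
proof -
  assume "w \<in> D \<times> D"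
  then obtain y1 y2 where "fst w = br X0 y1" "snd w = br X0 y2"
    using D_br by (metis mem_Times_iff)
  then have "w = P (X0, X0) (y1, y2)" by (simp add: prod_eq_iff)
  then show ?thesis by blast
qed

lemma P_in_DD: "P x y \<in> D \<times> D"
  by (simp add: mem_Times_iff br_in_D)

lemma F_DD: assumes "lie_ring_aut P F" shows "F ` (D \<times> D) = D \<times> D"
proof (intro set_eqI iffI)
  fix w assume "w \<in> F ` (D \<times> D)"
  then obtain u where u: "u \<in> D \<times> D" "w = F u" by blast
  obtain y where "u = P (X0, X0) y" using DD_br[OF u(1)] by blast
  then have "w = P (F (X0, X0)) (F y)" using u(2) lra_br[OF assms] by simp
  then show "w \<in> D \<times> D" using P_in_DD by simp
next
  fix w assume "w \<in> D \<times> D"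
  then obtain y where y: "w = P (X0, X0) y" using DD_br by blast
  obtain a where a: "(X0, X0) = F a" using lra_surj[OF assms] by blast
  obtain b where b: "y = F b" using lra_surj[OF assms] by blast
  have "w = F (P a b)" using y a b lra_br[OF assms] by simp
  moreover have "P a b \<in> D \<times> D" by (rule P_in_DD)
  ultimately show "w \<in> F ` (D \<times> D)" by (rule image_eqI)
qed

lemma dir_pt:
  assumes F: "lie_ring_aut P F" and X: "X \<notin> Z"
  shows "fst (F (X, 0)) \<in> Z \<longleftrightarrow> snd (F (X, 0)) \<notin> Z"
proof -
  obtain d where d: "d \<in> D" "d \<noteq> 0" using D_nz by blast
  have r0: "range (P (X, 0)) = D \<times> {0}" using range_P[of "(X,0)"] X Z_0 by simp
  have img: "F ` (D \<times> {0}) = range (P (F (X, 0)))" using lra_range[OF F] r0 by metis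
  show ?thesis
  proof (cases "fst (F (X, 0)) \<in> Z")
    case True
    show ?thesis
    proof (rule ccontr)
      assume "\<not> ?thesis"
      then have "snd (F (X, 0)) \<in> Z" using True by simp
      then have "range (P (F (X, 0))) = {0} \<times> {0}" using range_P True by simp
      then have "F (d, 0) \<in> {0} \<times> {0}" using img d by blast
      then have "F (d, 0) = F 0" using lra_0[OF F] by (simp add: mem_Times_iff prod_eq_iff)
      then have "(d, 0) = (0 :: 'a \<times> 'a)" using lra_inj_eq[OF F] by blast
      then show False using d by (simp add: zero_prod_def)
    qed
  next
    case False
    show ?thesis
    proof (rule ccontr)
      assume "\<not> ?thesis"
      then have "snd (F (X, 0)) \<notin> Z" using False by simp
      then have "range (P (F (X, 0))) = D \<times> D" using range_P False by simp
      then have e1: "F ` (D \<times> {0}) = D \<times> D" using img by simp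
      have e2: "F ` (D \<times> D) = D \<times> D" by (rule F_DD[OF F])
      have "inj F" using bij_is_inj[OF lra_bij[OF F]] .
      then have "D \<times> {0} = D \<times> D" using e1 e2 by (metis inj_image_eq_iff)
      moreover have "(d, d) \<in> D \<times> D" using d by simp
      ultimately have "(d, d) \<in> D \<times> {0}" by simp
      then show False using d by simp
    qed
  qed
qed

end


context nsl
begin

lemma F_Z: "lie_ring_aut P F \<Longrightarrow> p \<in> lie_center P \<Longrightarrow> fst (F p) \<in> Z \<and> snd (F p) \<in> Z"
  using lra_center ZP_iff by blast

lemma dir1:
  assumes F: "lie_ring_aut P F"
  shows "(\<forall>X. snd (F (X, 0)) \<in> Z) \<or> (\<forall>X. fst (F (X, 0)) \<in> Z)"
proof (rule ccontr)
  assume "\<not> ?thesis"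
  then obtain X1 X2 where h1: "snd (F (X1, 0)) \<notin> Z" and h2: "fst (F (X2, 0)) \<notin> Z" by blast
  have X1: "X1 \<notin> Z"
  proof
    assume "X1 \<in> Z"
    then have "(X1, 0) \<in> lie_center P" using ZP_iff Z_0 by simp
    then show False using F_Z[OF F] h1 by blast
  qed
  have X2: "X2 \<notin> Z"
  proof
    assume "X2 \<in> Z"
    then have "(X2, 0) \<in> lie_center P" using ZP_iff Z_0 by simp
    then show False using F_Z[OF F] h2 by blast
  qed
  have f1: "fst (F (X1, 0)) \<in> Z" using dir_pt[OF F X1] h1 by blast
  have s2: "snd (F (X2, 0)) \<in> Z" using dir_pt[OF F X2] h2 by blast
  have sum: "F (X1 + X2, 0) = F (X1, 0) + F (X2, 0)"
  proof -
    have "(X1 + X2, 0) = (X1, 0) + (X2, (0::'a))" by simp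
    then show ?thesis using lra_add[OF F] by metis
  qed
  show False
  proof (cases "X1 + X2 \<in> Z")
    case False
    have "fst (F (X1 + X2, 0)) = fst (F (X2, 0)) + fst (F (X1, 0))" using sum by simp
    then have a: "fst (F (X1 + X2, 0)) \<notin> Z" using Z_add_not[OF h2 f1] by simp
    have "snd (F (X1 + X2, 0)) = snd (F (X1, 0)) + snd (F (X2, 0))" using sum by simp
    then have b: "snd (F (X1 + X2, 0)) \<notin> Z" using Z_add_not[OF h1 s2] by simp
    show False using dir_pt[OF F False] a b by blast
  next
    case True
    then have "(X1 + X2, 0) \<in> lie_center P" using ZP_iff Z_0 by simp
    then have c: "fst (F (X1 + X2, 0)) \<in> Z" using F_Z[OF F] by blast
    have "fst (F (X2, 0)) = fst (F (X1 + X2, 0)) - fst (F (X1, 0))" using sum by simp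
    then have "fst (F (X2, 0)) \<in> Z" using Z_diff[OF c f1] by simp
    then show False using h2 by blast
  qed
qed

lemma both_nc:
  assumes F: "lie_ring_aut P F"
  shows "fst (F (X0, X0)) \<notin> Z \<and> snd (F (X0, X0)) \<notin> Z"
proof -
  obtain d where d: "d \<in> D" "d \<noteq> 0" using D_nz by blast
  have "range (P (X0, X0)) = D \<times> D" using range_P X0 by simp
  then have "range (P (F (X0, X0))) = D \<times> D" using lra_range[OF F] F_DD[OF F] by metis
  then have r: "(if fst (F (X0, X0)) \<in> Z then {0} else D) \<times> (if snd (F (X0, X0)) \<in> Z then {0} else D) = D \<times> D"
    using range_P by simp
  have dd: "(d, d) \<in> D \<times> D" using d by simp
  show ?thesis
  proof (intro conjI notI)
    assume "fst (F (X0, X0)) \<in> Z"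
    then show False using r dd d by (auto split: if_splits)
  next
    assume "snd (F (X0, X0)) \<in> Z"
    then show False using r dd d by (auto split: if_splits)
  qed
qed

lemma dir_final:
  assumes F: "lie_ring_aut P F"
  shows "((\<forall>X. snd (F (X, 0)) \<in> Z) \<and> (\<forall>Y. fst (F (0, Y)) \<in> Z)) \<or>
         ((\<forall>X. fst (F (X, 0)) \<in> Z) \<and> (\<forall>Y. snd (F (0, Y)) \<in> Z))"
proof -
  have Fs: "lie_ring_aut P (F \<circ> sw)" using lra_comp[OF F sw_lra] .
  have d2: "(\<forall>Y. snd (F (0, Y)) \<in> Z) \<or> (\<forall>Y. fst (F (0, Y)) \<in> Z)"
    using dir1[OF Fs] by simp
  have sum: "F (X0, X0) = F (X0, 0) + F (0, X0)"
  proof -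
    have "(X0, X0) = (X0, 0) + (0, X0)" by simp
    then show ?thesis using lra_add[OF F] by metis
  qed
  have nc: "fst (F (X0, X0)) \<notin> Z" "snd (F (X0, X0)) \<notin> Z" using both_nc[OF F] by auto
  have n1: "\<not> ((\<forall>X. snd (F (X, 0)) \<in> Z) \<and> (\<forall>Y. snd (F (0, Y)) \<in> Z))"
  proof
    assume h: "(\<forall>X. snd (F (X, 0)) \<in> Z) \<and> (\<forall>Y. snd (F (0, Y)) \<in> Z)"
    have "snd (F (X0, X0)) = snd (F (X0, 0)) + snd (F (0, X0))" using sum by simp
    then have "snd (F (X0, X0)) \<in> Z" using h Z_add by simp
    then show False using nc by blast
  qed
  have n2: "\<not> ((\<forall>X. fst (F (X, 0)) \<in> Z) \<and> (\<forall>Y. fst (F (0, Y)) \<in> Z))"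
  proof
    assume h: "(\<forall>X. fst (F (X, 0)) \<in> Z) \<and> (\<forall>Y. fst (F (0, Y)) \<in> Z)"
    have "fst (F (X0, X0)) = fst (F (X0, 0)) + fst (F (0, X0))" using sum by simp
    then have "fst (F (X0, X0)) \<in> Z" using h Z_add by simp
    then show False using nc by blast
  qed
  show ?thesis using dir1[OF F] d2 n1 n2 by blast
qed

end


lemma proj_uniq:
  fixes x a b :: "'a::euclidean_space"
  assumes "subspace S" "a \<in> S" "b \<in> S" "\<forall>w\<in>S. (x - a) \<bullet> w = 0" "\<forall>w\<in>S. (x - b) \<bullet> w = 0"
  shows "a = b"
proof -
  have ab: "a - b \<in> S" using assms subspace_diff by blast
  have "(a - b) \<bullet> (a - b) = (x - b) \<bullet> (a - b) - (x - a) \<bullet> (a - b)"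
    by (simp add: inner_diff_left)
  also have "\<dots> = 0" using assms(4,5) ab by simp
  finally show ?thesis by simp
qed

lemma proj_ex:
  fixes S :: "'a::euclidean_space set"
  assumes S: "subspace S"
  shows "\<exists>p. linear p \<and> (\<forall>x. p x \<in> S) \<and> (\<forall>x. \<forall>w\<in>S. (x - p x) \<bullet> w = 0)"
proof -
  have "\<forall>x. \<exists>y. y \<in> S \<and> (\<forall>w\<in>S. (x - y) \<bullet> w = 0)"
  proof
    fix x
    obtain y z where "y \<in> span S" "\<And>w. w \<in> span S \<Longrightarrow> orthogonal z w" "x = y + z"
      using orthogonal_subspace_decomp_exists by blast
    moreover have "span S = S" using S by (rule span_eq_iff[THEN iffD2])
    ultimately have "y \<in> S \<and> (\<forall>w\<in>S. (x - y) \<bullet> w = 0)" by (simp add: orthogonal_def)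
    then show "\<exists>y. y \<in> S \<and> (\<forall>w\<in>S. (x - y) \<bullet> w = 0)" by blast
  qed
  then obtain p where p: "\<And>x. p x \<in> S" "\<And>x. \<forall>w\<in>S. (x - p x) \<bullet> w = 0" by metis
  have "linear p"
  proof (rule linearI)
    fix x y :: 'a and c :: real
    have "\<forall>w\<in>S. (x + y - (p x + p y)) \<bullet> w = 0"
    proof
      fix w assume "w \<in> S"
      have "(x + y - (p x + p y)) \<bullet> w = (x - p x) \<bullet> w + (y - p y) \<bullet> w"
        by (simp add: algebra_simps inner_diff_left inner_add_left)
      then show "(x + y - (p x + p y)) \<bullet> w = 0" using p(2) \<open>w \<in> S\<close> by simp
    qed
    then show "p (x + y) = p x + p y"
      using proj_uniq[OF S p(1) _ p(2)] subspace_add[OF S p(1) p(1)] by blast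
    have "\<forall>w\<in>S. (c *\<^sub>R x - c *\<^sub>R p x) \<bullet> w = 0"
    proof
      fix w assume "w \<in> S"
      have "(c *\<^sub>R x - c *\<^sub>R p x) \<bullet> w = c * ((x - p x) \<bullet> w)"
        by (simp add: algebra_simps inner_diff_left)
      then show "(c *\<^sub>R x - c *\<^sub>R p x) \<bullet> w = 0" using p(2) \<open>w \<in> S\<close> by simp
    qed
    then show "p (c *\<^sub>R x) = c *\<^sub>R p x"
      using proj_uniq[OF S p(1) _ p(2)] subspace_scale[OF S p(1)] by blast
  qed
  then show ?thesis using p by blast
qed

lemma proj_id:
  fixes S :: "'a::euclidean_space set"
  assumes S: "subspace S" and p: "\<forall>x. p x \<in> S" "\<forall>x. \<forall>w\<in>S. (x - p x) \<bullet> w = 0"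
    and s: "s \<in> S"
  shows "p s = s"
  using proj_uniq[where S=S and a="p s" and b=s and x=s] S p s by simp

lemma proj_zero:
  fixes S :: "'a::euclidean_space set"
  assumes S: "subspace S" and p: "\<forall>x. p x \<in> S" "\<forall>x. \<forall>w\<in>S. (x - p x) \<bullet> w = 0"
    and s: "\<forall>w\<in>S. v \<bullet> w = 0"
  shows "p v = 0"
  using proj_uniq[where S=S and a="p v" and b=0 and x=v] S subspace_0[OF S] p s by simp

context nsl
begin

lemma E_ex:
  "\<exists>E pE. E \<subseteq> Z \<and> linear pE \<and> (\<forall>x. pE x \<in> E) \<and> (\<forall>e\<in>E. pE e = e) \<and> (\<forall>d\<in>D. pE d = 0) \<and>
     (\<forall>z\<in>Z. \<exists>d\<in>D. \<exists>e\<in>E. z = d + e) \<and> (\<forall>d\<in>D. \<forall>e\<in>E. d + e = 0 \<longrightarrow> e = 0)"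
proof -
  obtain pD where pD: "linear pD" "\<forall>x. pD x \<in> D" "\<forall>x. \<forall>w\<in>D. (x - pD x) \<bullet> w = 0"
    using proj_ex[OF subspace_D] by blast
  define E where "E = {z \<in> Z. \<forall>d\<in>D. z \<bullet> d = 0}"
  have sE: "subspace E"
    unfolding subspace_def E_def
    by (auto simp: Z_0 Z_add inner_add_left subspace_scale[OF subspace_Z])
  obtain pE where pE: "linear pE" "\<forall>x. pE x \<in> E" "\<forall>x. \<forall>w\<in>E. (x - pE x) \<bullet> w = 0"
    using proj_ex[OF sE] by blast
  have EZ: "E \<subseteq> Z" unfolding E_def by blast
  have c1: "\<forall>e\<in>E. pE e = e" using proj_id[OF sE pE(2,3)] by blast
  have c2: "\<forall>d\<in>D. pE d = 0"
  proof
    fix d assume d: "d \<in> D"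
    have "\<forall>w\<in>E. d \<bullet> w = 0" using d unfolding E_def by (auto simp: inner_commute)
    then show "pE d = 0" using proj_zero[OF sE pE(2,3)] by blast
  qed
  have c3: "\<forall>z\<in>Z. \<exists>d\<in>D. \<exists>e\<in>E. z = d + e"
  proof
    fix z assume z: "z \<in> Z"
    have "pD z \<in> Z" using pD(2) D_sub_Z by blast
    then have "z - pD z \<in> Z" using Z_diff z by blast
    then have "z - pD z \<in> E" unfolding E_def using pD(3) by blast
    moreover have "z = pD z + (z - pD z)" by simp
    ultimately show "\<exists>d\<in>D. \<exists>e\<in>E. z = d + e" using pD(2) by blast
  qed
  have c4: "\<forall>d\<in>D. \<forall>e\<in>E. d + e = 0 \<longrightarrow> e = 0"
  proof (intro ballI impI)
    fix d e assume d: "d \<in> D" and e: "e \<in> E" and de: "d + e = 0"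
    have "e \<bullet> d = 0" using e d unfolding E_def by blast
    moreover have "d = - e" using de by (simp add: eq_neg_iff_add_eq_0)
    ultimately have "e \<bullet> e = 0" by simp
    then show "e = 0" by simp
  qed
  show ?thesis using EZ pE(1,2) c1 c2 c3 c4 by blast
qed

end


context nsl
begin

lemma factor:
  assumes G: "lie_ring_aut P G"
    and A1: "\<forall>X. snd (G (X, 0)) \<in> Z" and A2: "\<forall>Y. fst (G (0, Y)) \<in> Z"
  shows "\<exists>H. lie_ring_aut br H \<and> (\<forall>X. fst (G (X, 0)) - H X \<in> Z)"
proof -
  define G1 where "G1 X = fst (G (X, 0))" for X
  have g_add: "G1 (x + y) = G1 x + G1 y" for x y
  proof -
    have "(x + y, 0) = (x, 0) + (y, (0::'a))" by simp
    then have "G (x + y, 0) = G (x, 0) + G (y, 0)" using lra_add[OF G] by metis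
    then show ?thesis unfolding G1_def by simp
  qed
  have g_addf: "addf G1" unfolding addf_def using g_add by blast
  have g_diff: "G1 (x - y) = G1 x - G1 y" for x y using addf_diff[OF g_addf] .
  have g_0: "G1 0 = 0" using addf_0[OF g_addf] .
  have g_br: "G1 (br x y) = br (G1 x) (G1 y)" for x y
  proof -
    have "(br x y, 0) = P (x, 0) (y, 0)" by simp
    then have "G (br x y, 0) = P (G (x, 0)) (G (y, 0))" using lra_br[OF G] by metis
    then show ?thesis unfolding G1_def by simp
  qed
  have g_Z: "x \<in> Z \<Longrightarrow> G1 x \<in> Z" for x
  proof -
    assume "x \<in> Z"
    then have "(x, 0) \<in> lie_center P" using ZP_iff Z_0 by simp
    then show "G1 x \<in> Z" unfolding G1_def using F_Z[OF G] by blast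
  qed
  have g_refl: "G1 x \<in> Z \<Longrightarrow> x \<in> Z" for x
  proof -
    assume "G1 x \<in> Z"
    then have "G (x, 0) \<in> lie_center P" using ZP_iff A1 unfolding G1_def by blast
    then have "(x, 0) \<in> lie_center P" using lra_center[OF G] by blast
    then show "x \<in> Z" using ZP_iff by simp
  qed
  have g_D: "d \<in> D \<Longrightarrow> G1 d \<in> D" for d
  proof -
    assume "d \<in> D"
    then obtain y where "d = br X0 y" using D_br by blast
    then show "G1 d \<in> D" using g_br br_in_D by simp
  qed
  have g_Dsnd: "d \<in> D \<Longrightarrow> snd (G (d, 0)) = 0" for d
  proof -
    assume "d \<in> D"
    then obtain y where "d = br X0 y" using D_br by blast
    then have "(d, 0) = P (X0, 0) (y, 0)" by simp
    then have "G (d, 0) = P (G (X0, 0)) (G (y, 0))" using lra_br[OF G] by metis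
    then have "snd (G (d, 0)) = br (snd (G (X0, 0))) (snd (G (y, 0)))" by simp
    then show ?thesis using A1 Z_iff by simp
  qed
  have g_inj: "d \<in> D \<Longrightarrow> G1 d = 0 \<Longrightarrow> d = 0" for d
  proof -
    assume d: "d \<in> D" "G1 d = 0"
    then have "G (d, 0) = 0" using g_Dsnd unfolding G1_def by (simp add: prod_eq_iff)
    then have "G (d, 0) = G 0" using lra_0[OF G] by simp
    then have "(d, 0) = (0 :: 'a \<times> 'a)" using lra_inj_eq[OF G] by blast
    then show "d = 0" by (simp add: zero_prod_def)
  qed
  have g_onto: "d \<in> D \<Longrightarrow> \<exists>d'\<in>D. d = G1 d'" for d
  proof -
    assume "d \<in> D"
    then obtain y where y: "d = br X0 y" using D_br by blast
    obtain p where p: "(X0, 0) = G p" using lra_surj[OF G] by blast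
    obtain q where q: "(y, 0) = G q" using lra_surj[OF G] by blast
    have "(d, 0) = P (G p) (G q)" using y p q by (metis P_simp br0r)
    then have dG: "(d, 0) = G (P p q)" using lra_br[OF G] by metis
    have "P p q = (br (fst p) (fst q), 0) + (0, br (snd p) (snd q))" by (simp add: prod_eq_iff)
    then have "G (P p q) = G (br (fst p) (fst q), 0) + G (0, br (snd p) (snd q))"
      using lra_add[OF G] by metis
    moreover have "fst (G (0, br (snd p) (snd q))) = 0"
    proof -
      have "(0, br (snd p) (snd q)) = P (0, snd p) (0, snd q)" by simp
      then have "G (0, br (snd p) (snd q)) = P (G (0, snd p)) (G (0, snd q))"
        using lra_br[OF G] by metis
      then have "fst (G (0, br (snd p) (snd q))) = br (fst (G (0, snd p))) (fst (G (0, snd q)))"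
        by simp
      then show ?thesis using A2 Z_iff by simp
    qed
    ultimately have "fst (G (P p q)) = G1 (br (fst p) (fst q))" unfolding G1_def by simp
    then have "d = G1 (br (fst p) (fst q))" using dG by (metis fst_conv)
    then show ?thesis using br_in_D by blast
  qed
  have g_modZ: "\<exists>X. W - G1 X \<in> Z" for W
  proof -
    obtain p where p: "(W, 0) = G p" using lra_surj[OF G] by blast
    have "p = (fst p, 0) + (0, snd p)" by (simp add: prod_eq_iff)
    then have "G p = G (fst p, 0) + G (0, snd p)" using lra_add[OF G] by metis
    then have "W = G1 (fst p) + fst (G (0, snd p))" using p unfolding G1_def by (metis fst_add fst_conv)
    then have "W - G1 (fst p) \<in> Z" using A2 by simp
    then show ?thesis by blast
  qed
  obtain E pE where EZ: "E \<subseteq> Z" and pl: "linear pE" and pin: "\<forall>x. pE x \<in> E"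
    and pid: "\<forall>e\<in>E. pE e = e" and pD0: "\<forall>d\<in>D. pE d = 0"
    and dec: "\<forall>z\<in>Z. \<exists>d\<in>D. \<exists>e\<in>E. z = d + e"
    and dis: "\<forall>d\<in>D. \<forall>e\<in>E. d + e = 0 \<longrightarrow> e = 0"
    using E_ex by blast
  have pZ: "pE x \<in> Z" for x using pin EZ by blast
  have p_add: "pE (x + y) = pE x + pE y" for x y using linear_add[OF pl] .
  have p_diff: "pE (x - y) = pE x - pE y" for x y using linear_diff[OF pl] .
  have pp: "pE (pE x) = pE x" for x using pid pin by blast
  define H where "H X = G1 (X - pE X) + pE X" for X
  have h_add: "H (x + y) = H x + H y" for x y
  proof -
    have e: "x + y - pE (x + y) = (x - pE x) + (y - pE y)" using p_add by simp
    have "H (x + y) = G1 ((x - pE x) + (y - pE y)) + pE (x + y)" unfolding H_def by (subst e) (rule refl)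
    also have "\<dots> = H x + H y" unfolding H_def using g_add p_add by (simp add: ac_simps)
    finally show ?thesis .
  qed
  have h_addf: "addf H" unfolding addf_def using h_add by blast
  have h_br: "H (br x y) = br (H x) (H y)" for x y
  proof -
    have "pE (br x y) = 0" using pD0 br_in_D by blast
    then have l: "H (br x y) = G1 (br x y)" unfolding H_def by simp
    have "br (H x) (H y) = br (G1 (x - pE x)) (G1 (y - pE y))"
      unfolding H_def using absorbl[OF pZ] absorbr[OF pZ] by simp
    also have "\<dots> = G1 (br (x - pE x) (y - pE y))" using g_br by simp
    also have "br (x - pE x) (y - pE y) = br x y"
    proof -
      have "br (x - pE x) (y - pE y) = br (x + - pE x) (y + - pE y)" by simp
      also have "\<dots> = br x y" using absorbl[OF Z_neg[OF pZ]] absorbr[OF Z_neg[OF pZ]] by simp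
      finally show ?thesis .
    qed
    finally show ?thesis using l by simp
  qed
  have h_ker: "H x = 0 \<Longrightarrow> x = 0" for x
  proof -
    assume h: "H x = 0"
    then have "G1 (x - pE x) = - pE x" unfolding H_def by (simp add: eq_neg_iff_add_eq_0)
    then have "G1 (x - pE x) \<in> Z" using Z_neg[OF pZ] by simp
    then have "x - pE x \<in> Z" using g_refl by blast
    then obtain d e where d: "d \<in> D" and e: "e \<in> E" and de: "x - pE x = d + e" using dec by blast
    have "pE (x - pE x) = 0" using p_diff pp by simp
    moreover have "pE (d + e) = e" using p_add pD0 d pid e by simp
    ultimately have "e = 0" using de by simp
    then have xd: "x - pE x = d" using de by simp
    then have "G1 d + pE x = 0" using h unfolding H_def by simp
    then have "pE x = 0" using dis g_D[OF d] pin by blast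
    then have "G1 d = 0" using \<open>G1 d + pE x = 0\<close> by simp
    then have "d = 0" using g_inj d by blast
    then show "x = 0" using xd \<open>pE x = 0\<close> by simp
  qed
  have h_inj: "inj H"
  proof (rule injI)
    fix x y assume "H x = H y"
    then have "H (x - y) = 0" using addf_diff[OF h_addf] by simp
    then have "x - y = 0" by (rule h_ker)
    then show "x = y" by simp
  qed
  have h_surj: "surj H"
  proof (rule surjI[of _ "\<lambda>W. SOME X. H X = W"])
    fix W
    obtain X1 where X1: "W - G1 X1 \<in> Z" using g_modZ by blast
    obtain d1 e1 where d1: "d1 \<in> D" and e1: "e1 \<in> E" and de1: "W - G1 X1 = d1 + e1"
      using dec X1 by blast
    obtain d1' where d1': "d1' \<in> D" "d1 = G1 d1'" using g_onto[OF d1] by blast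
    define u0 where "u0 = X1 + d1'"
    have u0: "W - G1 u0 = e1" unfolding u0_def using de1 d1' g_add by (simp add: algebra_simps)
    obtain d2 e2 where d2: "d2 \<in> D" and e2: "e2 \<in> E" and de2: "G1 (pE u0) = d2 + e2"
      using dec g_Z[OF pZ] by blast
    obtain d3 where d3: "d3 \<in> D" "d2 = G1 d3" using g_onto[OF d2] by blast
    define u where "u = u0 - pE u0 + d3"
    have pu: "pE u = 0" unfolding u_def using p_add p_diff pp pD0 d3(1) by simp
    have "W - G1 u = (W - G1 u0) + G1 (pE u0) - G1 d3" unfolding u_def using g_add g_diff
      by (simp add: algebra_simps)
    also have "\<dots> = e1 + e2" using u0 de2 d3 by simp
    finally have Wu: "W - G1 u = e1 + e2" .
    have Wu_E: "W - G1 u \<in> E"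
    proof -
      have "pE (e1 + e2) = e1 + e2" using p_add pid e1 e2 by simp
      then show ?thesis using Wu pin by metis
    qed
    define X where "X = u + (W - G1 u)"
    have "pE X = W - G1 u" unfolding X_def using p_add pu pid Wu_E by simp
    then have "H X = W" unfolding H_def X_def by simp
    then show "H (SOME X. H X = W) = W" by (rule someI)
  qed
  have lra: "lie_ring_aut br H"
    unfolding lie_ring_aut_def using h_inj h_surj h_add h_br by (simp add: bij_def)
  have "fst (G (X, 0)) - H X \<in> Z" for X
  proof -
    have "fst (G (X, 0)) - H X = G1 (pE X) - pE X"
      unfolding H_def G1_def[symmetric] using g_diff by (simp add: algebra_simps)
    then show ?thesis using Z_diff[OF g_Z[OF pZ] pZ] by simp
  qed
  then show ?thesis using lra by blast
qed

end


lemma sum_split_add: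
  fixes k1 k2 :: nat
  shows "(\<Sum>i<k1 + k2. f i) = (\<Sum>i<k1. f i) + (\<Sum>j<k2. f (k1 + j))"
  by (induction k2) (simp_all add: ac_simps)

lemma sum_pair0: "(\<Sum>l\<in>A. (f l, 0::'b::comm_monoid_add)) = ((\<Sum>l\<in>A. f l), 0)"
  by (simp add: prod_eq_iff fst_sum snd_sum)

lemma sum_0pair: "(\<Sum>l\<in>A. (0::'b::comm_monoid_add, f l)) = (0, (\<Sum>l\<in>A. f l))"
  by (simp add: prod_eq_iff fst_sum snd_sum)

context nsl
begin

lemma cfp1:
  assumes "complex_field_piece br W t"
  shows "complex_field_piece P (W \<times> {0}) (\<lambda>p. (t (fst p), 0))"
proof -
  obtain J m e \<phi> where cs: "complex_structure br W J" and cb: "complex_basis W J m e"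
    and fa: "complex_field_aut \<phi>"
    and sc: "\<forall>p<m. \<forall>q<m. \<exists>c. (\<forall>r\<ge>m. c r = 0) \<and>
            br (e p) (e q) = (\<Sum>r<m. cmul J (c r) (e r)) \<and> (\<forall>r<m. \<phi> (c r) = c r)"
    and sm: "\<forall>c. (\<forall>l\<ge>m. c l = 0) \<longrightarrow>
            t (\<Sum>l<m. cmul J (c l) (e l)) = (\<Sum>l<m. cmul J (\<phi> (c l)) (e l))"
    using assms unfolding complex_field_piece_def by blast
  define J' where "J' p = (J (fst p), 0::'a)" for p :: "'a \<times> 'a"
  define e' where "e' l = (e l, 0::'a)" for l
  have cm: "cmul J' c (e' l) = (cmul J c (e l), 0)" for c l
    by (simp add: cmul_def J'_def e'_def)
  have sumeq: "(\<Sum>l<m. cmul J' (c l) (e' l)) = ((\<Sum>l<m. cmul J (c l) (e l)), 0)" for c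
    by (simp add: cm sum_pair0)
  have Jl: "linear J" using cs by (simp add: complex_structure_def)
  have cs': "complex_structure P (W \<times> {0}) J'"
    unfolding complex_structure_def
  proof (intro conjI ballI)
    show "linear J'"
    proof (rule linearI)
      fix x y :: "'a \<times> 'a" and c :: real
      show "J' (x + y) = J' x + J' y" by (simp add: J'_def linear_add[OF Jl])
      show "J' (c *\<^sub>R x) = c *\<^sub>R J' x" by (simp add: J'_def linear_scale[OF Jl])
    qed
  next
    fix x :: "'a \<times> 'a" assume x: "x \<in> W \<times> {0}"
    then show "J' x \<in> W \<times> {0}" using cs by (auto simp: J'_def complex_structure_def mem_Times_iff)
    show "J' (J' x) = - x" using cs x by (auto simp: J'_def complex_structure_def mem_Times_iff prod_eq_iff)
  next
    fix x y :: "'a \<times> 'a" assume x: "x \<in> W \<times> {0}" and y: "y \<in> W \<times> {0}"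
    then show "P (J' x) y = J' (P x y)"
      using cs by (auto simp: J'_def complex_structure_def mem_Times_iff prod_eq_iff)
  qed
  have cb': "complex_basis (W \<times> {0}) J' m e'"
    unfolding complex_basis_def
  proof (intro conjI allI impI ballI)
    fix l assume "l < m"
    then show "e' l \<in> W \<times> {0}" using cb by (simp add: complex_basis_def e'_def)
  next
    fix x :: "'a \<times> 'a" assume x: "x \<in> W \<times> {0}"
    then have a: "fst x \<in> W" and s0: "snd x = 0" by (auto simp: mem_Times_iff)
    have ex: "\<exists>!c. (\<forall>l\<ge>m. c l = 0) \<and> fst x = (\<Sum>l<m. cmul J (c l) (e l))"
      using cb a by (simp add: complex_basis_def)
    have eqv: "(x = (\<Sum>l<m. cmul J' (c l) (e' l))) = (fst x = (\<Sum>l<m. cmul J (c l) (e l)))" for c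
      using s0 by (simp add: sumeq prod_eq_iff)
    show "\<exists>!c. (\<forall>l\<ge>m. c l = 0) \<and> x = (\<Sum>l<m. cmul J' (c l) (e' l))"
      unfolding eqv using ex .
  qed
  have sc': "\<forall>p<m. \<forall>q<m. \<exists>c. (\<forall>r\<ge>m. c r = 0) \<and>
            P (e' p) (e' q) = (\<Sum>r<m. cmul J' (c r) (e' r)) \<and> (\<forall>r<m. \<phi> (c r) = c r)"
  proof (intro allI impI)
    fix p q assume "p < m" "q < m"
    have pe: "P (e' p) (e' q) = (br (e p) (e q), 0)" by (simp add: e'_def)
    obtain c where "(\<forall>r\<ge>m. c r = 0)" "br (e p) (e q) = (\<Sum>r<m. cmul J (c r) (e r))"
      "(\<forall>r<m. \<phi> (c r) = c r)" using sc \<open>p < m\<close> \<open>q < m\<close> by blast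
    then show "\<exists>c. (\<forall>r\<ge>m. c r = 0) \<and>
            P (e' p) (e' q) = (\<Sum>r<m. cmul J' (c r) (e' r)) \<and> (\<forall>r<m. \<phi> (c r) = c r)"
      using pe by (intro exI[of _ c]) (simp add: sumeq)
  qed
  have sm': "\<forall>c. (\<forall>l\<ge>m. c l = 0) \<longrightarrow>
            (\<lambda>p. (t (fst p), 0)) (\<Sum>l<m. cmul J' (c l) (e' l)) = (\<Sum>l<m. cmul J' (\<phi> (c l)) (e' l))"
    using sm by (simp add: sumeq)
  show ?thesis unfolding complex_field_piece_def
    using cs' cb' fa sc' sm' by blast
qed

lemma cfp2:
  assumes "complex_field_piece br W t"
  shows "complex_field_piece P ({0} \<times> W) (\<lambda>p. (0, t (snd p)))"
proof -
  obtain J m e \<phi> where cs: "complex_structure br W J" and cb: "complex_basis W J m e"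
    and fa: "complex_field_aut \<phi>"
    and sc: "\<forall>p<m. \<forall>q<m. \<exists>c. (\<forall>r\<ge>m. c r = 0) \<and>
            br (e p) (e q) = (\<Sum>r<m. cmul J (c r) (e r)) \<and> (\<forall>r<m. \<phi> (c r) = c r)"
    and sm: "\<forall>c. (\<forall>l\<ge>m. c l = 0) \<longrightarrow>
            t (\<Sum>l<m. cmul J (c l) (e l)) = (\<Sum>l<m. cmul J (\<phi> (c l)) (e l))"
    using assms unfolding complex_field_piece_def by blast
  define J' where "J' p = (0::'a, J (snd p))" for p :: "'a \<times> 'a"
  define e' where "e' l = (0::'a, e l)" for l
  have cm: "cmul J' c (e' l) = (0, cmul J c (e l))" for c l
    by (simp add: cmul_def J'_def e'_def)
  have sumeq: "(\<Sum>l<m. cmul J' (c l) (e' l)) = (0, (\<Sum>l<m. cmul J (c l) (e l)))" for c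
    by (simp add: cm sum_0pair)
  have Jl: "linear J" using cs by (simp add: complex_structure_def)
  have cs': "complex_structure P ({0} \<times> W) J'"
    unfolding complex_structure_def
  proof (intro conjI ballI)
    show "linear J'"
    proof (rule linearI)
      fix x y :: "'a \<times> 'a" and c :: real
      show "J' (x + y) = J' x + J' y" by (simp add: J'_def linear_add[OF Jl])
      show "J' (c *\<^sub>R x) = c *\<^sub>R J' x" by (simp add: J'_def linear_scale[OF Jl])
    qed
  next
    fix x :: "'a \<times> 'a" assume x: "x \<in> {0} \<times> W"
    then show "J' x \<in> {0} \<times> W" using cs by (auto simp: J'_def complex_structure_def mem_Times_iff)
    show "J' (J' x) = - x" using cs x by (auto simp: J'_def complex_structure_def mem_Times_iff prod_eq_iff)
  next
    fix x y :: "'a \<times> 'a" assume x: "x \<in> {0} \<times> W" and y: "y \<in> {0} \<times> W"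
    then show "P (J' x) y = J' (P x y)"
      using cs by (auto simp: J'_def complex_structure_def mem_Times_iff prod_eq_iff)
  qed
  have cb': "complex_basis ({0} \<times> W) J' m e'"
    unfolding complex_basis_def
  proof (intro conjI allI impI ballI)
    fix l assume "l < m"
    then show "e' l \<in> {0} \<times> W" using cb by (simp add: complex_basis_def e'_def)
  next
    fix x :: "'a \<times> 'a" assume x: "x \<in> {0} \<times> W"
    then have a: "snd x \<in> W" and s0: "fst x = 0" by (auto simp: mem_Times_iff)
    have ex: "\<exists>!c. (\<forall>l\<ge>m. c l = 0) \<and> snd x = (\<Sum>l<m. cmul J (c l) (e l))"
      using cb a by (simp add: complex_basis_def)
    have eqv: "(x = (\<Sum>l<m. cmul J' (c l) (e' l))) = (snd x = (\<Sum>l<m. cmul J (c l) (e l)))" for c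
      using s0 by (simp add: sumeq prod_eq_iff)
    show "\<exists>!c. (\<forall>l\<ge>m. c l = 0) \<and> x = (\<Sum>l<m. cmul J' (c l) (e' l))"
      unfolding eqv using ex .
  qed
  have sc': "\<forall>p<m. \<forall>q<m. \<exists>c. (\<forall>r\<ge>m. c r = 0) \<and>
            P (e' p) (e' q) = (\<Sum>r<m. cmul J' (c r) (e' r)) \<and> (\<forall>r<m. \<phi> (c r) = c r)"
  proof (intro allI impI)
    fix p q assume "p < m" "q < m"
    have pe: "P (e' p) (e' q) = (0, br (e p) (e q))" by (simp add: e'_def)
    obtain c where "(\<forall>r\<ge>m. c r = 0)" "br (e p) (e q) = (\<Sum>r<m. cmul J (c r) (e r))"
      "(\<forall>r<m. \<phi> (c r) = c r)" using sc \<open>p < m\<close> \<open>q < m\<close> by blast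
    then show "\<exists>c. (\<forall>r\<ge>m. c r = 0) \<and>
            P (e' p) (e' q) = (\<Sum>r<m. cmul J' (c r) (e' r)) \<and> (\<forall>r<m. \<phi> (c r) = c r)"
      using pe by (intro exI[of _ c]) (simp add: sumeq)
  qed
  have sm': "\<forall>c. (\<forall>l\<ge>m. c l = 0) \<longrightarrow>
            (\<lambda>p. (0, t (snd p))) (\<Sum>l<m. cmul J' (c l) (e' l)) = (\<Sum>l<m. cmul J' (\<phi> (c l)) (e' l))"
    using sm by (simp add: sumeq)
  show ?thesis unfolding complex_field_piece_def
    using cs' cb' fa sc' sm' by blast
qed

end


lemma decomp_uniq:
  "ideal_decomposition br k V \<Longrightarrow> is_decomp k V x u \<Longrightarrow> is_decomp k V x u' \<Longrightarrow> u = u'"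
  unfolding ideal_decomposition_def by blast

context nsl
begin

lemma field_aut_prod:
  assumes f1: "field_aut br \<sigma>1" and f2: "field_aut br \<sigma>2"
  shows "field_aut P (map_prod \<sigma>1 \<sigma>2)"
proof -
  obtain k1 V1 s1 where i1: "ideal_decomposition br k1 V1"
    and p1: "\<forall>i<k1. (\<forall>x\<in>V1 i. s1 i x = x) \<or> complex_field_piece br (V1 i) (s1 i)"
    and d1: "\<forall>x v. is_decomp k1 V1 x v \<longrightarrow> \<sigma>1 x = (\<Sum>i<k1. s1 i (v i))"
    using f1 unfolding field_aut_def by blast
  obtain k2 V2 s2 where i2: "ideal_decomposition br k2 V2"
    and p2: "\<forall>i<k2. (\<forall>x\<in>V2 i. s2 i x = x) \<or> complex_field_piece br (V2 i) (s2 i)"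
    and d2: "\<forall>x v. is_decomp k2 V2 x v \<longrightarrow> \<sigma>2 x = (\<Sum>i<k2. s2 i (v i))"
    using f2 unfolding field_aut_def by blast
  define k where "k = k1 + k2"
  define V where "V i = (if i < k1 then V1 i \<times> {0} else {0} \<times> V2 (i - k1))" for i
  define s where "s i = (if i < k1 then (\<lambda>p. (s1 i (fst p), 0)) else (\<lambda>p. (0, s2 (i - k1) (snd p))))" for i
  define pr1 where "pr1 v = (\<lambda>i. if i < k1 then fst (v i) else (0::'a))" for v :: "nat \<Rightarrow> 'a \<times> 'a"
  define pr2 where "pr2 v = (\<lambda>j. if j < k2 then snd (v (k1 + j)) else (0::'a))" for v :: "nat \<Rightarrow> 'a \<times> 'a"
  have a1: "is_decomp k V x v \<Longrightarrow> i < k1 \<Longrightarrow> fst (v i) \<in> V1 i \<and> snd (v i) = 0" for x v i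
  proof -
    assume h: "is_decomp k V x v" "i < k1"
    then have "v i \<in> V i" unfolding is_decomp_def k_def by simp
    then show ?thesis using h(2) unfolding V_def by (auto simp: mem_Times_iff)
  qed
  have a2: "is_decomp k V x v \<Longrightarrow> j < k2 \<Longrightarrow> fst (v (k1 + j)) = 0 \<and> snd (v (k1 + j)) \<in> V2 j" for x v j
  proof -
    assume h: "is_decomp k V x v" "j < k2"
    then have "v (k1 + j) \<in> V (k1 + j)" unfolding is_decomp_def k_def by simp
    then show ?thesis unfolding V_def by (auto simp: mem_Times_iff)
  qed
  have comp: "is_decomp k V x v \<Longrightarrow>
      v i = (if i < k1 then (pr1 v i, 0) else if i < k then (0, pr2 v (i - k1)) else 0)" for x v i
  proof -
    assume h: "is_decomp k V x v"
    show ?thesis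
    proof (cases "i < k1")
      case True
      then show ?thesis using a1[OF h True] unfolding pr1_def by (simp add: prod_eq_iff)
    next
      case False
      show ?thesis
      proof (cases "i < k")
        case True
        then have j: "i - k1 < k2" "k1 + (i - k1) = i" using False unfolding k_def by auto
        show ?thesis using a2[OF h j(1)] j False True unfolding pr2_def by (simp add: prod_eq_iff)
      next
        case F: False
        then show ?thesis using h False unfolding is_decomp_def by simp
      qed
    qed
  qed
  have proj: "is_decomp k V x v \<Longrightarrow> is_decomp k1 V1 (fst x) (pr1 v) \<and> is_decomp k2 V2 (snd x) (pr2 v)" for x v
  proof -
    assume h: "is_decomp k V x v"
    have xs: "x = (\<Sum>i<k. v i)" using h unfolding is_decomp_def by blast
    have "fst x = (\<Sum>i<k1. fst (v i)) + (\<Sum>j<k2. fst (v (k1 + j)))"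
      using xs unfolding k_def by (simp add: fst_sum sum_split_add)
    also have "(\<Sum>j<k2. fst (v (k1 + j))) = 0" using a2[OF h] by simp
    also have "(\<Sum>i<k1. fst (v i)) = (\<Sum>i<k1. pr1 v i)" unfolding pr1_def by simp
    finally have sf: "fst x = (\<Sum>i<k1. pr1 v i)" by simp
    have "snd x = (\<Sum>i<k1. snd (v i)) + (\<Sum>j<k2. snd (v (k1 + j)))"
      using xs unfolding k_def by (simp add: snd_sum sum_split_add)
    also have "(\<Sum>i<k1. snd (v i)) = 0" using a1[OF h] by simp
    also have "(\<Sum>j<k2. snd (v (k1 + j))) = (\<Sum>j<k2. pr2 v j)" unfolding pr2_def by simp
    finally have ss: "snd x = (\<Sum>j<k2. pr2 v j)" by simp
    show ?thesis unfolding is_decomp_def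
      using sf ss a1[OF h] a2[OF h] unfolding pr1_def pr2_def by auto
  qed
  have ideal: "ideal_decomposition P k V"
    unfolding ideal_decomposition_def
  proof (intro conjI allI impI)
    fix i assume ik: "i < k"
    show "lie_ideal P (V i)"
    proof (cases "i < k1")
      case True
      then have li: "lie_ideal br (V1 i)" using i1 unfolding ideal_decomposition_def by blast
      have sub: "subspace (V1 i \<times> {0})"
        using li subspace_Times subspace_single_0 unfolding lie_ideal_def by blast
      have "\<forall>x v. v \<in> V1 i \<times> {0} \<longrightarrow> P x v \<in> V1 i \<times> {0}"
        using li unfolding lie_ideal_def by (auto simp: mem_Times_iff)
      then show ?thesis using sub True unfolding lie_ideal_def V_def by simp
    next
      case False
      then have "i - k1 < k2" using ik unfolding k_def by simp
      then have li: "lie_ideal br (V2 (i - k1))" using i2 unfolding ideal_decomposition_def by blast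
      have sub: "subspace ({0} \<times> V2 (i - k1))"
        using li subspace_Times subspace_single_0 unfolding lie_ideal_def by blast
      have "\<forall>x v. v \<in> {0} \<times> V2 (i - k1) \<longrightarrow> P x v \<in> {0} \<times> V2 (i - k1)"
        using li unfolding lie_ideal_def by (auto simp: mem_Times_iff)
      then show ?thesis using sub False unfolding lie_ideal_def V_def by simp
    qed
  next
    fix x :: "'a \<times> 'a"
    obtain u1 where u1: "is_decomp k1 V1 (fst x) u1" using i1 unfolding ideal_decomposition_def by blast
    obtain u2 where u2: "is_decomp k2 V2 (snd x) u2" using i2 unfolding ideal_decomposition_def by blast
    define v where "v i = (if i < k1 then (u1 i, 0) else if i < k then (0, u2 (i - k1)) else 0)" for i
    have "is_decomp k V x v"
      unfolding is_decomp_def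
    proof (intro conjI allI impI)
      fix i assume "i < k"
      then show "v i \<in> V i" using u1 u2 unfolding v_def V_def is_decomp_def k_def
        by (auto simp: mem_Times_iff)
    next
      fix i assume "k \<le> i"
      then show "v i = 0" unfolding v_def k_def by simp
    next
      have "(\<Sum>i<k. v i) = (\<Sum>i<k1. v i) + (\<Sum>j<k2. v (k1 + j))"
        unfolding k_def by (rule sum_split_add)
      also have "(\<Sum>i<k1. v i) = (\<Sum>i<k1. (u1 i, 0))" unfolding v_def by simp
      also have "\<dots> = (fst x, 0)" using u1 unfolding is_decomp_def by (simp add: sum_pair0)
      also have "(\<Sum>j<k2. v (k1 + j)) = (\<Sum>j<k2. (0, u2 j))" unfolding v_def k_def by simp
      also have "\<dots> = (0, snd x)" using u2 unfolding is_decomp_def by (simp add: sum_0pair)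
      finally show "x = (\<Sum>i<k. v i)" by (simp add: prod_eq_iff)
    qed
    moreover have "v' = v''" if "is_decomp k V x v'" "is_decomp k V x v''" for v' v''
    proof -
      have "pr1 v' = pr1 v''" using decomp_uniq[OF i1] proj[OF that(1)] proj[OF that(2)] by blast
      moreover have "pr2 v' = pr2 v''" using decomp_uniq[OF i2] proj[OF that(1)] proj[OF that(2)] by blast
      ultimately show ?thesis using comp[OF that(1)] comp[OF that(2)] by (intro ext) simp
    qed
    ultimately show "\<exists>!v. is_decomp k V x v" by blast
  qed
  have pieces: "\<forall>i<k. (\<forall>x\<in>V i. s i x = x) \<or> complex_field_piece P (V i) (s i)"
  proof (intro allI impI)
    fix i assume ik: "i < k"
    show "(\<forall>x\<in>V i. s i x = x) \<or> complex_field_piece P (V i) (s i)"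
    proof (cases "i < k1")
      case True
      then have "(\<forall>x\<in>V1 i. s1 i x = x) \<or> complex_field_piece br (V1 i) (s1 i)" using p1 by blast
      then show ?thesis
      proof
        assume "\<forall>x\<in>V1 i. s1 i x = x"
        then have "\<forall>x\<in>V i. s i x = x" using True unfolding V_def s_def
          by (auto simp: mem_Times_iff prod_eq_iff)
        then show ?thesis by blast
      next
        assume "complex_field_piece br (V1 i) (s1 i)"
        then have "complex_field_piece P (V i) (s i)" using cfp1 True unfolding V_def s_def by simp
        then show ?thesis by blast
      qed
    next
      case False
      then have j: "i - k1 < k2" using ik unfolding k_def by simp
      then have "(\<forall>x\<in>V2 (i - k1). s2 (i - k1) x = x) \<or> complex_field_piece br (V2 (i - k1)) (s2 (i - k1))"
        using p2 by blast
      then show ?thesis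
      proof
        assume "\<forall>x\<in>V2 (i - k1). s2 (i - k1) x = x"
        then have "\<forall>x\<in>V i. s i x = x" using False unfolding V_def s_def
          by (auto simp: mem_Times_iff prod_eq_iff)
        then show ?thesis by blast
      next
        assume "complex_field_piece br (V2 (i - k1)) (s2 (i - k1))"
        then have "complex_field_piece P (V i) (s i)" using cfp2 False unfolding V_def s_def by simp
        then show ?thesis by blast
      qed
    qed
  qed
  have form: "\<forall>x v. is_decomp k V x v \<longrightarrow> map_prod \<sigma>1 \<sigma>2 x = (\<Sum>i<k. s i (v i))"
  proof (intro allI impI)
    fix x v assume h: "is_decomp k V x v"
    have e1: "\<sigma>1 (fst x) = (\<Sum>i<k1. s1 i (pr1 v i))" using d1 proj[OF h] by blast
    have e2: "\<sigma>2 (snd x) = (\<Sum>j<k2. s2 j (pr2 v j))" using d2 proj[OF h] by blast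
    have "(\<Sum>i<k. s i (v i)) = (\<Sum>i<k1. s i (v i)) + (\<Sum>j<k2. s (k1 + j) (v (k1 + j)))"
      unfolding k_def by (rule sum_split_add)
    also have "(\<Sum>i<k1. s i (v i)) = (\<Sum>i<k1. (s1 i (pr1 v i), 0))"
      unfolding s_def pr1_def by simp
    also have "\<dots> = (\<Sum>i<k1. s1 i (pr1 v i), 0)" by (rule sum_pair0)
    also have "(\<Sum>j<k2. s (k1 + j) (v (k1 + j))) = (\<Sum>j<k2. (0, s2 j (pr2 v j)))"
      unfolding s_def pr2_def by simp
    also have "\<dots> = (0, \<Sum>j<k2. s2 j (pr2 v j))" by (rule sum_0pair)
    finally have "(\<Sum>i<k. s i (v i)) = (\<sigma>1 (fst x), \<sigma>2 (snd x))" using e1 e2 by simp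
    then show "map_prod \<sigma>1 \<sigma>2 x = (\<Sum>i<k. s i (v i))" by (cases x) simp
  qed
  show ?thesis unfolding field_aut_def using ideal pieces form by blast
qed

end


context nsl
begin

lemma main_A:
  assumes pac: "partial_automatic_continuity br"
    and G: "lie_ring_aut P G"
    and A1: "\<forall>X. snd (G (X, 0)) \<in> Z" and A2: "\<forall>Y. fst (G (0, Y)) \<in> Z"
  shows "\<exists>\<mu> f \<sigma>. central_aut P \<mu> \<and> lie_alg_aut P f \<and> field_aut P \<sigma> \<and> G = \<mu> \<circ> f \<circ> \<sigma>"
proof -
  obtain H1 where H1: "lie_ring_aut br H1" and c1: "\<forall>X. fst (G (X, 0)) - H1 X \<in> Z"
    using factor[OF G A1 A2] by blast
  define G' where "G' = sw \<circ> G \<circ> sw"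
  have G': "lie_ring_aut P G'" unfolding G'_def using lra_comp[OF lra_comp[OF sw_lra G] sw_lra] .
  have A1': "\<forall>X. snd (G' (X, 0)) \<in> Z" using A2 unfolding G'_def by (simp add: sw_def)
  have A2': "\<forall>Y. fst (G' (0, Y)) \<in> Z" using A1 unfolding G'_def by (simp add: sw_def)
  obtain H2 where H2: "lie_ring_aut br H2" and c2': "\<forall>X. fst (G' (X, 0)) - H2 X \<in> Z"
    using factor[OF G' A1' A2'] by blast
  have c2: "\<forall>X. snd (G (0, X)) - H2 X \<in> Z" using c2' unfolding G'_def by (simp add: sw_def)
  define T where "T = map_prod H1 H2"
  have T: "lie_ring_aut P T" unfolding T_def using map_prod_lra[OF H1 H2] .
  define \<mu>0 where "\<mu>0 = G \<circ> inv T"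
  have m0: "central_aut P \<mu>0"
    unfolding central_aut_def
  proof (intro conjI allI)
    show "lie_ring_aut P \<mu>0" unfolding \<mu>0_def using lra_comp[OF G lra_inv[OF T]] .
    fix x :: "'a \<times> 'a"
    define a where "a = fst (inv T x)"
    define b where "b = snd (inv T x)"
    have ab: "inv T x = (a, b)" unfolding a_def b_def by simp
    have xT: "x = T (a, b)" using lra_inv_f[OF T, of x] ab by simp
    have "(a, b) = (a, 0) + (0, b)" by simp
    then have Gab: "G (a, b) = G (a, 0) + G (0, b)" using lra_add[OF G] by metis
    have "\<mu>0 x - x = G (a, b) - (H1 a, H2 b)" unfolding \<mu>0_def using ab xT T_def by simp
    also have "\<dots> = (fst (G (a, 0)) - H1 a + fst (G (0, b)), snd (G (a, 0)) + (snd (G (0, b)) - H2 b))"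
      using Gab by (simp add: prod_eq_iff)
    finally have eq: "\<mu>0 x - x = (fst (G (a, 0)) - H1 a + fst (G (0, b)), snd (G (a, 0)) + (snd (G (0, b)) - H2 b))" .
    have "fst (G (a, 0)) - H1 a + fst (G (0, b)) \<in> Z" using c1 A2 Z_add by blast
    moreover have "snd (G (a, 0)) + (snd (G (0, b)) - H2 b) \<in> Z" using c2 A1 Z_add by blast
    ultimately show "\<mu>0 x - x \<in> lie_center P" using eq ZP_iff by simp
  qed
  have GT: "G = \<mu>0 \<circ> T"
    unfolding \<mu>0_def by (rule ext) (simp add: lra_f_inv[OF T])
  obtain \<mu>1 f1 \<sigma>1 where d1: "central_aut br \<mu>1" "lie_alg_aut br f1" "field_aut br \<sigma>1"
    "H1 = \<mu>1 \<circ> f1 \<circ> \<sigma>1"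
    using pac H1 unfolding partial_automatic_continuity_def by blast
  obtain \<mu>2 f2 \<sigma>2 where d2: "central_aut br \<mu>2" "lie_alg_aut br f2" "field_aut br \<sigma>2"
    "H2 = \<mu>2 \<circ> f2 \<circ> \<sigma>2"
    using pac H2 unfolding partial_automatic_continuity_def by blast
  have Tdec: "T = map_prod \<mu>1 \<mu>2 \<circ> map_prod f1 f2 \<circ> map_prod \<sigma>1 \<sigma>2"
    unfolding T_def d1(4) d2(4) by (rule ext) (simp add: map_prod_def split: prod.splits)
  have cm: "central_aut P (\<mu>0 \<circ> map_prod \<mu>1 \<mu>2)"
    using central_comp[OF m0 map_prod_central[OF d1(1) d2(1)] subspace_ZP] .
  have "G = (\<mu>0 \<circ> map_prod \<mu>1 \<mu>2) \<circ> map_prod f1 f2 \<circ> map_prod \<sigma>1 \<sigma>2"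
    using GT Tdec by (simp add: comp_assoc)
  then show ?thesis
    using cm map_prod_lie_alg[OF d1(2) d2(2)] field_aut_prod[OF d1(3) d2(3)] by blast
qed

lemma main_all:
  assumes pac: "partial_automatic_continuity br"
    and F: "lie_ring_aut P F"
  shows "\<exists>\<mu> f \<sigma>. central_aut P \<mu> \<and> lie_alg_aut P f \<and> field_aut P \<sigma> \<and> F = \<mu> \<circ> f \<circ> \<sigma>"
proof -
  consider (A) "(\<forall>X. snd (F (X, 0)) \<in> Z) \<and> (\<forall>Y. fst (F (0, Y)) \<in> Z)"
    | (B) "(\<forall>X. fst (F (X, 0)) \<in> Z) \<and> (\<forall>Y. snd (F (0, Y)) \<in> Z)"
    using dir_final[OF F] by blast
  then show ?thesis
  proof cases
    case A
    then show ?thesis using main_A[OF pac F] by blast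
  next
    case B
    define G where "G = sw \<circ> F"
    have G: "lie_ring_aut P G" unfolding G_def using lra_comp[OF sw_lra F] .
    have A1: "\<forall>X. snd (G (X, 0)) \<in> Z" using B unfolding G_def by (simp add: sw_def)
    have A2: "\<forall>Y. fst (G (0, Y)) \<in> Z" using B unfolding G_def by (simp add: sw_def)
    obtain \<mu> f \<sigma> where d: "central_aut P \<mu>" "lie_alg_aut P f" "field_aut P \<sigma>" "G = \<mu> \<circ> f \<circ> \<sigma>"
      using main_A[OF pac G A1 A2] by blast
    have "F = (sw \<circ> \<mu> \<circ> sw) \<circ> (sw \<circ> f) \<circ> \<sigma>"
    proof (rule ext)
      fix x
      have "F x = sw (G x)" unfolding G_def by simp
      also have "\<dots> = sw (\<mu> (f (\<sigma> x)))" using d(4) by simp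
      finally show "F x = ((sw \<circ> \<mu> \<circ> sw) \<circ> (sw \<circ> f) \<circ> \<sigma>) x" by simp
    qed
    then show ?thesis using sw_central[OF d(1)] sw_lie_alg[OF d(2)] d(3) by blast
  qed
qed

end

theorem proposition3p5:
  fixes br :: "'a::euclidean_space \<Rightarrow> 'a \<Rightarrow> 'a"
  assumes "lie_algebra br"
    and "two_step_nilpotent br"
    and "nonsingular br"
    and "partial_automatic_continuity br"
  shows "partial_automatic_continuity (prod_bracket br br)"
proof -
  interpret nsl br using assms(1-3) by unfold_locales
  show ?thesis
    unfolding partial_automatic_continuity_def using main_all[OF assms(4)] by blast
qed


end
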